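(* Let $V=\{1,\dots,p\}$ and let $F:2^V\to\mathbb{R}$ be submodular, nondecreasing, with $F(\varnothing)=0$ and $F(\{k\})>0$ for all $k\in V$. Let $\Omega(w)=f(|w|)$ where $f$ is the Lovász extension of $F$. For $J\subset V$, let $F_J:2^J\to\mathbb{R}$, $F_J(A)=F(A)$ (restriction), and $F^J:2^{J^c}\to\mathbb{R}$, $F^J(A)=F(A\cup J)-F(J)$ (contraction). Let $\Omega_J(u)=f_J(|u|)$ for $u\in\mathbb{R}^J$ and $\Omega^J(v)=f^J(|v|)$ for $v\in\mathbb{R}^{J^c}$, where $f_J,f^J$ are the Lovász extensions of $F_J,F^J$. Then: (i) for all $w\in\mathbb{R}^p$, $\Omega(w)\geqslant\Omega_J(w_J)+\Omega^J(w_{J^c})$; (ii) for all $w\in\mathbb{R}^p$, if $\min_{j\in J}|w_j|\geqslant\max_{j\in J^c}|w_j|$, then $\Omega(w)=\Omega_J(w_J)+\Omega^J(w_{J^c})$; (iii) $\Omega^J$ is a norm on $\mathbb{R}^{J^c}$ if and only if $J$ is a stable set.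
   Context: The Lovász extension of a set-function $G$ on a finite ground set $W$ is the function on $\mathbb{R}_+^W$ given, for $w$ with components ordered $w_{j_1}\geqslant\cdots\geqslant w_{j_m}\geqslant0$, by $\sum_{k=1}^m w_{j_k}[G(\{j_1,\dots,j_k\})-G(\{j_1,\dots,j_{k-1}\})]$. $|w|$ is the componentwise absolute value; $w_J$ is the subvector indexed by $J$; $J^c=V\setminus J$. A set $J\subset V$ is stable if every strict superset $B\supsetneq J$ satisfies $F(B)>F(J)$. *)

theory Defs
  imports Complex_Main
begin

text \<open>Lovasz extension of a set-function G on a finite ground set W, evaluated at
  w (only the values w j for j in W matter; intended for nonnegative w).\<close>
definition lovasz :: "('a set \<Rightarrow> real) \<Rightarrow> 'a set \<Rightarrow> ('a \<Rightarrow> real) \<Rightarrow> real" where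
  "lovasz G W w =
    (let js = (SOME js. distinct js \<and> set js = W \<and> sorted_wrt (\<lambda>i j. w i \<ge> w j) js)
     in \<Sum>k<length js. w (js ! k) * (G (set (take (Suc k) js)) - G (set (take k js))))"

definition submodular_on :: "'a set \<Rightarrow> ('a set \<Rightarrow> real) \<Rightarrow> bool" where
  "submodular_on V F \<longleftrightarrow>
     (\<forall>A B. A \<subseteq> V \<longrightarrow> B \<subseteq> V \<longrightarrow> F (A \<union> B) + F (A \<inter> B) \<le> F A + F B)"

definition nondecreasing_on :: "'a set \<Rightarrow> ('a set \<Rightarrow> real) \<Rightarrow> bool" where
  "nondecreasing_on V F \<longleftrightarrow> (\<forall>A B. A \<subseteq> B \<longrightarrow> B \<subseteq> V \<longrightarrow> F A \<le> F B)"

definition stable_set :: "'a set \<Rightarrow> ('a set \<Rightarrow> real) \<Rightarrow> 'a set \<Rightarrow> bool" where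
  "stable_set V F J \<longleftrightarrow> (\<forall>B. J \<subset> B \<longrightarrow> B \<subseteq> V \<longrightarrow> F B > F J)"

text \<open>Vectors of R^S are represented as functions vanishing outside S.\<close>
definition vec_on :: "'a set \<Rightarrow> ('a \<Rightarrow> real) \<Rightarrow> bool" where
  "vec_on S v \<longleftrightarrow> (\<forall>i. i \<notin> S \<longrightarrow> v i = 0)"

definition is_norm_on :: "'a set \<Rightarrow> (('a \<Rightarrow> real) \<Rightarrow> real) \<Rightarrow> bool" where
  "is_norm_on S N \<longleftrightarrow>
     (\<forall>v. vec_on S v \<longrightarrow> N v \<ge> 0) \<and>
     (\<forall>v. vec_on S v \<longrightarrow> (N v = 0 \<longleftrightarrow> v = (\<lambda>_. 0))) \<and>
     (\<forall>v a. vec_on S v \<longrightarrow> N (\<lambda>i. a * v i) = \<bar>a\<bar> * N v) \<and>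
     (\<forall>u v. vec_on S u \<longrightarrow> vec_on S v \<longrightarrow> N (\<lambda>i. u i + v i) \<le> N u + N v)"

definition restr_fun :: "('a set \<Rightarrow> real) \<Rightarrow> 'a set \<Rightarrow> 'a set \<Rightarrow> real" where
  "restr_fun F J = (\<lambda>A. F A)"

definition contr_fun :: "('a set \<Rightarrow> real) \<Rightarrow> 'a set \<Rightarrow> 'a set \<Rightarrow> real" where
  "contr_fun F J = (\<lambda>A. F (A \<union> J) - F J)"

end

theory Submission
  imports Defs
begin

fun lv :: "('a set \<Rightarrow> real) \<Rightarrow> ('a \<Rightarrow> real) \<Rightarrow> 'a set \<Rightarrow> 'a list \<Rightarrow> real" where
  "lv G w B [] = 0"
| "lv G w B (x#xs) = w x * (G (insert x B) - G B) + lv G w (insert x B) xs"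

fun greedy :: "('a set \<Rightarrow> real) \<Rightarrow> 'a set \<Rightarrow> 'a list \<Rightarrow> 'a \<Rightarrow> real" where
  "greedy G B [] = (\<lambda>_. 0)"
| "greedy G B (x#xs) = (greedy G (insert x B) xs)(x := G (insert x B) - G B)"

lemma lv_sum:
  "(\<Sum>k<length js. w (js!k) * (G (B \<union> set (take (Suc k) js)) - G (B \<union> set (take k js)))) = lv G w B js"
proof (induction js arbitrary: B)
  case Nil then show ?case by simp
next
  case (Cons x xs)
  have "(\<Sum>k<length (x#xs). w ((x#xs)!k) * (G (B \<union> set (take (Suc k) (x#xs))) - G (B \<union> set (take k (x#xs)))))
     = w x * (G (insert x B) - G B) + (\<Sum>k<length xs. w (xs!k) * (G (insert x B \<union> set (take (Suc k) xs)) - G (insert x B \<union> set (take k xs))))"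
    by (simp add: sum.lessThan_Suc_shift del: sum.lessThan_Suc)
  then show ?case using Cons[of "insert x B"] by simp
qed

lemma ex_sorted:
  assumes "finite W"
  shows "\<exists>js. distinct js \<and> set js = W \<and> sorted_wrt (\<lambda>i j. (w::_\<Rightarrow>real) i \<ge> w j) js"
proof -
  obtain xs where xs: "set xs = W" "distinct xs" using finite_distinct_list[OF assms] by blast
  define js where "js = sort_key (\<lambda>i. - w i) xs"
  have d: "distinct js" using xs unfolding js_def by simp
  have st: "set js = W" using xs unfolding js_def by simp
  have "sorted (map (\<lambda>i. - w i) js)" unfolding js_def by (rule sorted_sort_key)
  then have "sorted_wrt (\<lambda>i j. - w i \<le> - w j) js" by (simp only: sorted_map)
  then have so: "sorted_wrt (\<lambda>i j. w i \<ge> w j) js" by (rule sorted_wrt_mono_rel[rotated]) simp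
  show ?thesis using d st so by (intro exI[of _ js]) (intro conjI)
qed

lemma lovasz_some:
  assumes "finite W"
  obtains js where "distinct js" "set js = W" "sorted_wrt (\<lambda>i j. w i \<ge> w j) js"
    "lovasz G W w = lv G w {} js"
proof -
  let ?P = "\<lambda>js. distinct js \<and> set js = W \<and> sorted_wrt (\<lambda>i j. w i \<ge> w j) js"
  have "?P (SOME js. ?P js)" using someI_ex[OF ex_sorted[OF assms]] .
  moreover have "lovasz G W w = lv G w {} (SOME js. ?P js)"
    unfolding lovasz_def Let_def using lv_sum[of w "SOME js. ?P js" G "{}"] by simp
  ultimately show ?thesis using that by blast
qed

lemma lv_greedy:
  "distinct js \<Longrightarrow> lv G w B js = (\<Sum>i\<in>set js. w i * greedy G B js i)"
proof (induction js arbitrary: B)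
  case Nil then show ?case by simp
next
  case (Cons x xs)
  have "(\<Sum>i\<in>set xs. w i * greedy G B (x#xs) i) = (\<Sum>i\<in>set xs. w i * greedy G (insert x B) xs i)"
    using Cons.prems by (intro sum.cong) auto
  then show ?case using Cons by (simp add: sum.insert)
qed

lemma greedy_P:
  assumes "distinct js" "B \<inter> set js = {}" "submodular_on (B \<union> set js) G"
  shows "\<forall>A \<subseteq> set js. (\<Sum>i\<in>A. greedy G B js i) \<le> G (B \<union> A) - G B"
  using assms
proof (induction js arbitrary: B)
  case Nil then show ?case by simp
next
  case (Cons x xs)
  have IH: "\<forall>A \<subseteq> set xs. (\<Sum>i\<in>A. greedy G (insert x B) xs i) \<le> G (insert x B \<union> A) - G (insert x B)"
    using Cons.prems by (intro Cons.IH) (auto simp: insert_commute)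
  show ?case
  proof (intro allI impI)
    fix A assume A: "A \<subseteq> set (x#xs)"
    have eq: "\<And>A'. A' \<subseteq> set xs \<Longrightarrow> (\<Sum>i\<in>A'. greedy G B (x#xs) i) = (\<Sum>i\<in>A'. greedy G (insert x B) xs i)"
      using Cons.prems by (intro sum.cong) auto
    show "(\<Sum>i\<in>A. greedy G B (x#xs) i) \<le> G (B \<union> A) - G B"
    proof (cases "x \<in> A")
      case True
      let ?A = "A - {x}"
      have A': "?A \<subseteq> set xs" using A by auto
      have "(\<Sum>i\<in>A. greedy G B (x#xs) i) = greedy G B (x#xs) x + (\<Sum>i\<in>?A. greedy G B (x#xs) i)"
        using True A by (metis List.finite_set finite_subset sum.remove)
      also have "\<dots> = (G (insert x B) - G B) + (\<Sum>i\<in>?A. greedy G (insert x B) xs i)"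
        using eq[OF A'] by simp
      also have "\<dots> \<le> (G (insert x B) - G B) + (G (insert x B \<union> ?A) - G (insert x B))"
      proof -
        have "(\<Sum>i\<in>?A. greedy G (insert x B) xs i) \<le> G (insert x B \<union> ?A) - G (insert x B)"
          using IH A' by blast
        then show ?thesis by linarith
      qed
      also have "insert x B \<union> ?A = B \<union> A" using True by auto
      finally show ?thesis by simp
    next
      case False
      have A': "A \<subseteq> set xs" using A False by auto
      have "(\<Sum>i\<in>A. greedy G B (x#xs) i) \<le> G (insert x B \<union> A) - G (insert x B)"
        using eq[OF A'] IH A' by auto
      also have "\<dots> \<le> G (B \<union> A) - G B"
      proof -
        have "G ((B \<union> A) \<union> insert x B) + G ((B \<union> A) \<inter> insert x B) \<le> G (B \<union> A) + G (insert x B)"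
        proof -
          have "B \<union> A \<subseteq> B \<union> set (x#xs)" "insert x B \<subseteq> B \<union> set (x#xs)" using A by auto
          then show ?thesis using Cons.prems(3) unfolding submodular_on_def by blast
        qed
        moreover have "(B \<union> A) \<union> insert x B = insert x B \<union> A" by auto
        moreover have "(B \<union> A) \<inter> insert x B = B" using False A Cons.prems(2) by auto
        ultimately show ?thesis by simp
      qed
      finally show ?thesis .
    qed
  qed
qed

lemma lv_append: "lv G w B (xs @ ys) = lv G w B xs + lv G w (B \<union> set xs) ys"
  by (induction xs arbitrary: B) auto

lemma lv_shift: "lv G (\<lambda>i. w i - c) B xs = lv G w B xs - c * (G (B \<union> set xs) - G B)"
proof (induction xs arbitrary: B)
  case (Cons x xs)
  show ?case using Cons.IH[of "insert x B"] by (simp add: algebra_simps)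
qed simp

lemma lv_upper:
  assumes "sorted_wrt (\<lambda>i j. w i \<ge> w j) js" "\<forall>i\<in>set js. w i \<ge> 0" "distinct js"
    "\<forall>A \<subseteq> set js. (\<Sum>i\<in>A. s i) \<le> G (B \<union> A) - G B"
  shows "(\<Sum>i\<in>set js. w i * s i) \<le> lv G w B js"
  using assms
proof (induction js arbitrary: w rule: rev_induct)
  case Nil then show ?case by simp
next
  case (snoc y ys)
  define c where "c = w y"
  have yn: "y \<notin> set ys" using snoc.prems by simp
  have ge: "\<forall>i\<in>set ys. w i \<ge> c" using snoc.prems(1) unfolding c_def by (simp add: sorted_wrt_append)
  have c0: "c \<ge> 0" using snoc.prems(2) c_def by simp
  have IH: "(\<Sum>i\<in>set ys. (w i - c) * s i) \<le> lv G (\<lambda>i. w i - c) B ys"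
  proof (rule snoc.IH)
    show "sorted_wrt (\<lambda>i j. w i - c \<ge> w j - c) ys"
      using snoc.prems(1) by (simp add: sorted_wrt_append)
    show "\<forall>i\<in>set ys. w i - c \<ge> 0" using ge by auto
    show "distinct ys" using snoc.prems by simp
    show "\<forall>A \<subseteq> set ys. (\<Sum>i\<in>A. s i) \<le> G (B \<union> A) - G B" using snoc.prems(4) by auto
  qed
  have S: "(\<Sum>i\<in>set (ys@[y]). s i) \<le> G (B \<union> set (ys@[y])) - G B" using snoc.prems(4) by blast
  have "(\<Sum>i\<in>set (ys@[y]). w i * s i) = w y * s y + (\<Sum>i\<in>set ys. w i * s i)"
    using yn by simp
  also have "(\<Sum>i\<in>set ys. w i * s i) = (\<Sum>i\<in>set ys. (w i - c) * s i) + c * (\<Sum>i\<in>set ys. s i)"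
    by (simp add: sum_distrib_left sum.distrib[symmetric] algebra_simps)
  finally have eq: "(\<Sum>i\<in>set (ys@[y]). w i * s i) = (\<Sum>i\<in>set ys. (w i - c) * s i) + c * (\<Sum>i\<in>set (ys@[y]). s i)"
    using yn c_def by (simp add: algebra_simps)
  have "c * (\<Sum>i\<in>set (ys@[y]). s i) \<le> c * (G (B \<union> set (ys@[y])) - G B)"
    using S c0 by (rule mult_left_mono)
  then have "(\<Sum>i\<in>set (ys@[y]). w i * s i) \<le> lv G w B ys - c * (G (B \<union> set ys) - G B) + c * (G (B \<union> set (ys@[y])) - G B)"
    using eq IH lv_shift[of G w c B ys] by linarith
  also have "\<dots> = lv G w B (ys@[y])"
    by (simp add: lv_append c_def algebra_simps insert_commute)
  finally show ?case .
qed

lemma lovasz_any: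
  assumes "finite W" "distinct js" "set js = W" "sorted_wrt (\<lambda>i j. w i \<ge> w j) js"
    "\<forall>i\<in>W. w i \<ge> 0" "submodular_on W G"
  shows "lovasz G W w = lv G w {} js"
proof -
  obtain js0 where js0: "distinct js0" "set js0 = W" "sorted_wrt (\<lambda>i j. w i \<ge> w j) js0"
    "lovasz G W w = lv G w {} js0" using lovasz_some[OF assms(1)] by metis
  have P: "\<forall>A \<subseteq> set ks. (\<Sum>i\<in>A. greedy G {} ks i) \<le> G ({} \<union> A) - G {}"
    if "distinct ks" "set ks = W" for ks
    using greedy_P[of ks "{}" G] that assms by simp
  have "lv G w {} js0 \<le> lv G w {} js"
    using lv_greedy[OF js0(1)] lv_upper[OF assms(4) _ assms(2), of "greedy G {} js0" G "{}"]
      P[OF js0(1,2)] js0 assms by simp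
  moreover have "lv G w {} js \<le> lv G w {} js0"
    using lv_greedy[OF assms(2)] lv_upper[OF js0(3) _ js0(1), of "greedy G {} js" G "{}"]
      P[OF assms(2,3)] js0 assms by simp
  ultimately show ?thesis using js0 by simp
qed


lemma lv_contr: "lv (contr_fun F J) w B xs = lv F w (B \<union> J) xs"
proof (induction xs arbitrary: B)
  case (Cons x xs)
  show ?case using Cons.IH[of "insert x B"] by (simp add: contr_fun_def)
qed simp

lemma lv_nonneg:
  assumes "\<forall>A B. A \<subseteq> B \<longrightarrow> B \<subseteq> U \<longrightarrow> G A \<le> G B" "B \<union> set xs \<subseteq> U" "\<forall>x\<in>set xs. w x \<ge> 0"
  shows "lv G w B xs \<ge> 0"
  using assms(2,3)
proof (induction xs arbitrary: B)
  case (Cons x xs)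
  have "insert x B \<subseteq> U" using Cons.prems by auto
  then have "G B \<le> G (insert x B)" using assms(1) by blast
  then have "w x * (G (insert x B) - G B) \<ge> 0" using Cons.prems by simp
  moreover have "lv G w (insert x B) xs \<ge> 0" using Cons by (intro Cons.IH) auto
  ultimately show ?case by simp
qed simp

lemma greedy_nonneg:
  assumes "\<forall>A B. A \<subseteq> B \<longrightarrow> B \<subseteq> U \<longrightarrow> G A \<le> G B" "B \<union> set xs \<subseteq> U"
  shows "greedy G B xs i \<ge> 0"
  using assms(2)
proof (induction xs arbitrary: B)
  case (Cons x xs)
  have "insert x B \<subseteq> U" using Cons.prems by auto
  then have "G B \<le> G (insert x B)" using assms(1) by blast
  moreover have "greedy G (insert x B) xs i \<ge> 0" using Cons by (intro Cons.IH) auto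
  ultimately show ?case by simp
qed simp

lemma lv_scale: "lv G (\<lambda>i. c * w i) B xs = c * lv G w B xs"
proof (induction xs arbitrary: B)
  case (Cons x xs)
  show ?case using Cons.IH[of "insert x B"] by (simp add: algebra_simps)
qed simp

lemma lv_cong: "\<forall>x\<in>set xs. w x = w' x \<Longrightarrow> lv G w B xs = lv G w' B xs"
  by (induction xs arbitrary: B) auto

lemma lv_const: "lv G (\<lambda>_. c) B xs = c * (G (B \<union> set xs) - G B)"
proof (induction xs arbitrary: B)
  case (Cons x xs)
  show ?case using Cons.IH[of "insert x B"] by (simp add: algebra_simps)
qed simp

lemma sorted_wrt_all: "\<forall>x\<in>set xs. \<forall>y\<in>set xs. R x y \<Longrightarrow> sorted_wrt R xs"
  by (induction xs) auto

theorem proposition4: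
  fixes p :: nat and F :: "nat set \<Rightarrow> real" and J :: "nat set"
  defines "V \<equiv> {1..p}"
  assumes sub: "submodular_on V F"
    and mono: "nondecreasing_on V F"
    and empty: "F {} = 0"
    and single: "\<forall>k\<in>V. F {k} > 0"
    and JV: "J \<subseteq> V"
  shows
    "(\<forall>w :: nat \<Rightarrow> real.
        lovasz F V (\<lambda>i. \<bar>w i\<bar>)
          \<ge> lovasz (restr_fun F J) J (\<lambda>i. \<bar>w i\<bar>)
            + lovasz (contr_fun F J) (V - J) (\<lambda>i. \<bar>w i\<bar>))
   \<and> (\<forall>w :: nat \<Rightarrow> real.
        (\<forall>i\<in>J. \<forall>j\<in>V - J. \<bar>w i\<bar> \<ge> \<bar>w j\<bar>) \<longrightarrow>
        lovasz F V (\<lambda>i. \<bar>w i\<bar>)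
          = lovasz (restr_fun F J) J (\<lambda>i. \<bar>w i\<bar>)
            + lovasz (contr_fun F J) (V - J) (\<lambda>i. \<bar>w i\<bar>))
   \<and> (is_norm_on (V - J) (\<lambda>v. lovasz (contr_fun F J) (V - J) (\<lambda>i. \<bar>v i\<bar>))
        \<longleftrightarrow> stable_set V F J)"
proof -
  have finV: "finite V" unfolding V_def by simp
  define C where "C = contr_fun F J"
  define W where "W = V - J"
  have finW: "finite W" using finV W_def by simp
  have finJ: "finite J" using finV JV by (rule finite_subset[rotated])
  have restr: "restr_fun F J = F" unfolding restr_fun_def by simp
  have subH: "F (A \<union> B) + F (A \<inter> B) \<le> F A + F B" if "A \<subseteq> V" "B \<subseteq> V" for A B
    using sub that unfolding submodular_on_def by blast
  have monoH: "F A \<le> F B" if "A \<subseteq> B" "B \<subseteq> V" for A B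
    using mono that unfolding nondecreasing_on_def by blast
  have subJ: "submodular_on J F" unfolding submodular_on_def
  proof (intro allI impI)
    fix A B assume "A \<subseteq> J" "B \<subseteq> J"
    then have "A \<subseteq> V" "B \<subseteq> V" using JV by auto
    then show "F (A \<union> B) + F (A \<inter> B) \<le> F A + F B" by (rule subH)
  qed
  have subV: "submodular_on V F" by (rule sub)
  have subC: "submodular_on W C" unfolding submodular_on_def
  proof (intro allI impI)
    fix A B assume A: "A \<subseteq> W" and B: "B \<subseteq> W"
    have "A \<union> J \<subseteq> V" "B \<union> J \<subseteq> V" using A B JV W_def by auto
    then have "F ((A \<union> J) \<union> (B \<union> J)) + F ((A \<union> J) \<inter> (B \<union> J)) \<le> F (A \<union> J) + F (B \<union> J)"
      by (rule subH)
    moreover have "(A \<union> J) \<union> (B \<union> J) = (A \<union> B) \<union> J" "(A \<union> J) \<inter> (B \<union> J) = (A \<inter> B) \<union> J" by auto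
    ultimately show "C (A \<union> B) + C (A \<inter> B) \<le> C A + C B" unfolding C_def contr_fun_def by simp
  qed
  have monoC: "\<forall>A B. A \<subseteq> B \<longrightarrow> B \<subseteq> W \<longrightarrow> C A \<le> C B"
  proof (intro allI impI)
    fix A B assume "A \<subseteq> B" "B \<subseteq> W"
    then have "A \<union> J \<subseteq> B \<union> J" "B \<union> J \<subseteq> V" using JV W_def by auto
    then have "F (A \<union> J) \<le> F (B \<union> J)" by (rule monoH)
    then show "C A \<le> C B" unfolding C_def contr_fun_def by simp
  qed
  have C0: "C {} = 0" unfolding C_def contr_fun_def by simp
  have PP: "\<forall>A \<subseteq> set ks. (\<Sum>i\<in>A. greedy G {} ks i) \<le> G A - G {}"
    if "distinct ks" "submodular_on (set ks) G" for ks and G :: "nat set \<Rightarrow> real"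
    using greedy_P[of ks "{}" G] that by simp
  have parts: "\<exists>ls. distinct ls \<and> set ls = V \<and>
      lovasz (restr_fun F J) J a + lovasz (contr_fun F J) (V - J) a = lv F a {} ls \<and>
      ((\<forall>i\<in>J. \<forall>j\<in>V - J. a i \<ge> a j) \<longrightarrow> sorted_wrt (\<lambda>i j. a i \<ge> a j) ls)"
    for a :: "nat \<Rightarrow> real"
  proof -
    obtain jsJ where jsJ: "distinct jsJ" "set jsJ = J" "sorted_wrt (\<lambda>i j. a i \<ge> a j) jsJ"
      "lovasz F J a = lv F a {} jsJ" using lovasz_some[OF finJ] by metis
    obtain jsC where jsC: "distinct jsC" "set jsC = V - J" "sorted_wrt (\<lambda>i j. a i \<ge> a j) jsC"
      "lovasz (contr_fun F J) (V - J) a = lv (contr_fun F J) a {} jsC"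
      using lovasz_some[OF finW[unfolded W_def]] by metis
    have "lovasz (restr_fun F J) J a + lovasz (contr_fun F J) (V - J) a = lv F a {} (jsJ @ jsC)"
      using jsJ jsC by (simp add: restr lv_contr lv_append)
    moreover have "distinct (jsJ @ jsC)" "set (jsJ @ jsC) = V" using jsJ jsC JV by auto
    moreover have "(\<forall>i\<in>J. \<forall>j\<in>V - J. a i \<ge> a j) \<longrightarrow> sorted_wrt (\<lambda>i j. a i \<ge> a j) (jsJ @ jsC)"
      using jsJ jsC by (simp add: sorted_wrt_append)
    ultimately show ?thesis by blast
  qed
  have P1: "\<forall>w :: nat \<Rightarrow> real.
        lovasz F V (\<lambda>i. \<bar>w i\<bar>)
          \<ge> lovasz (restr_fun F J) J (\<lambda>i. \<bar>w i\<bar>)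
            + lovasz (contr_fun F J) (V - J) (\<lambda>i. \<bar>w i\<bar>)"
  proof
    fix w :: "nat \<Rightarrow> real"
    let ?a = "\<lambda>i. \<bar>w i\<bar>"
    obtain ls where ls: "distinct ls" "set ls = V"
      "lovasz (restr_fun F J) J ?a + lovasz (contr_fun F J) (V - J) ?a = lv F ?a {} ls"
      using parts[of ?a] by blast
    obtain jsV where jsV: "distinct jsV" "set jsV = V" "sorted_wrt (\<lambda>i j. ?a i \<ge> ?a j) jsV"
      "lovasz F V ?a = lv F ?a {} jsV" using lovasz_some[OF finV] by metis
    have "lv F ?a {} ls = (\<Sum>i\<in>V. ?a i * greedy F {} ls i)" using lv_greedy[OF ls(1)] ls by simp
    also have "\<dots> \<le> lv F ?a {} jsV"
      using lv_upper[OF jsV(3) _ jsV(1), of "greedy F {} ls" F "{}"] PP[OF ls(1)] ls jsV subV by simp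
    finally show "lovasz F V ?a \<ge> lovasz (restr_fun F J) J ?a + lovasz (contr_fun F J) (V - J) ?a"
      using ls jsV by simp
  qed
  have P2: "\<forall>w :: nat \<Rightarrow> real.
        (\<forall>i\<in>J. \<forall>j\<in>V - J. \<bar>w i\<bar> \<ge> \<bar>w j\<bar>) \<longrightarrow>
        lovasz F V (\<lambda>i. \<bar>w i\<bar>)
          = lovasz (restr_fun F J) J (\<lambda>i. \<bar>w i\<bar>)
            + lovasz (contr_fun F J) (V - J) (\<lambda>i. \<bar>w i\<bar>)"
  proof (intro allI impI)
    fix w :: "nat \<Rightarrow> real"
    let ?a = "\<lambda>i. \<bar>w i\<bar>"
    assume H: "\<forall>i\<in>J. \<forall>j\<in>V - J. \<bar>w i\<bar> \<ge> \<bar>w j\<bar>"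
    obtain ls where ls: "distinct ls" "set ls = V"
      "lovasz (restr_fun F J) J ?a + lovasz (contr_fun F J) (V - J) ?a = lv F ?a {} ls"
      "sorted_wrt (\<lambda>i j. ?a i \<ge> ?a j) ls"
      using parts[of ?a] H by blast
    show "lovasz F V ?a = lovasz (restr_fun F J) J ?a + lovasz (contr_fun F J) (V - J) ?a"
      using lovasz_any[OF finV ls(1,2) ls(4) _ subV] ls(3) by simp
  qed
  define N where "N = (\<lambda>v. lovasz C W (\<lambda>i. \<bar>v i\<bar>))"
  have Nlv: "N v = lv C (\<lambda>i. \<bar>v i\<bar>) {} js" if "distinct js" "set js = W"
     "sorted_wrt (\<lambda>i j. \<bar>v i\<bar> \<ge> \<bar>v j\<bar>) js" for v js
    unfolding N_def using lovasz_any[OF finW that _ subC] by simp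
  have P3: "is_norm_on W N \<longleftrightarrow> stable_set V F J"
  proof
    assume norm: "is_norm_on W N"
    show "stable_set V F J" unfolding stable_set_def
    proof (intro allI impI)
      fix B assume JB: "J \<subset> B" and BV: "B \<subseteq> V"
      show "F B > F J"
      proof (rule ccontr)
        assume "\<not> F B > F J"
        moreover have "F J \<le> F B" using JB BV by (intro monoH) auto
        ultimately have FBJ: "F B = F J" by simp
        define D where "D = B - J"
        have DW: "D \<subseteq> W" using BV D_def W_def by auto
        have finD: "finite D" using DW finW finite_subset by blast
        obtain d where dD: "d \<in> D" using JB D_def by auto
        define v where "v = (\<lambda>i. if i \<in> D then 1 else (0::real))"
        have vec: "vec_on W v" unfolding vec_on_def v_def using DW by auto
        let ?xs = "sorted_list_of_set D" and ?ys = "sorted_list_of_set (W - D)"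
        have ds: "distinct (?xs @ ?ys)" "set (?xs @ ?ys) = W" using finD finW DW by auto
        have so: "sorted_wrt (\<lambda>i j. \<bar>v i\<bar> \<ge> \<bar>v j\<bar>) (?xs @ ?ys)"
        proof -
          have "sorted_wrt (\<lambda>i j. \<bar>v i\<bar> \<ge> \<bar>v j\<bar>) ?xs"
            by (rule sorted_wrt_all) (simp add: v_def finD)
          moreover have "sorted_wrt (\<lambda>i j. \<bar>v i\<bar> \<ge> \<bar>v j\<bar>) ?ys"
            by (rule sorted_wrt_all) (simp add: v_def finW)
          moreover have "\<forall>x\<in>set ?xs. \<forall>y\<in>set ?ys. \<bar>v x\<bar> \<ge> \<bar>v y\<bar>" using finD finW by (simp add: v_def)
          ultimately show ?thesis by (simp only: sorted_wrt_append)
        qed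
        have "N v = lv C (\<lambda>i. \<bar>v i\<bar>) {} ?xs + lv C (\<lambda>i. \<bar>v i\<bar>) (set ?xs) ?ys"
          using Nlv[OF ds so] by (simp add: lv_append)
        also have "lv C (\<lambda>i. \<bar>v i\<bar>) {} ?xs = lv C (\<lambda>_. 1) {} ?xs"
          using finD by (intro lv_cong) (simp add: v_def)
        also have "\<dots> = C D - C {}" using finD by (simp add: lv_const)
        also have "lv C (\<lambda>i. \<bar>v i\<bar>) (set ?xs) ?ys = lv C (\<lambda>_. 0) (set ?xs) ?ys"
          using finW by (intro lv_cong) (simp add: v_def)
        also have "\<dots> = 0" by (simp add: lv_const)
        finally have "N v = C D - C {}" by simp
        moreover have "D \<union> J = B" using JB D_def by auto
        ultimately have "N v = 0" using FBJ C0 unfolding C_def contr_fun_def by simp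
        have Z: "\<forall>v. vec_on W v \<longrightarrow> (N v = 0 \<longleftrightarrow> v = (\<lambda>_. 0))"
          using norm unfolding is_norm_on_def by (elim conjE) assumption
        then have "v = (\<lambda>_. 0)" using vec \<open>N v = 0\<close> by simp
        then have "v d = 0" by simp
        then show False using dD v_def by simp
      qed
    qed
  next
    assume stable: "stable_set V F J"
    have nonneg: "N v \<ge> 0" for v
    proof -
      obtain js where js: "distinct js" "set js = W" "sorted_wrt (\<lambda>i j. \<bar>v i\<bar> \<ge> \<bar>v j\<bar>) js"
        "lovasz C W (\<lambda>i. \<bar>v i\<bar>) = lv C (\<lambda>i. \<bar>v i\<bar>) {} js" using lovasz_some[OF finW] by metis
      show ?thesis using lv_nonneg[OF monoC, of "{}" js] js unfolding N_def by simp
    qed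
    have zero: "N v = 0 \<longleftrightarrow> v = (\<lambda>_. 0)" if vec: "vec_on W v" for v
    proof
      assume v0: "v = (\<lambda>_. 0)"
      obtain js where "lovasz C W (\<lambda>_. 0) = lv C (\<lambda>_. 0) {} js" using lovasz_some[OF finW] by metis
      then show "N v = 0" using v0 unfolding N_def by (simp add: lv_const)
    next
      assume N0: "N v = 0"
      show "v = (\<lambda>_. 0)"
      proof (rule ccontr)
        assume "v \<noteq> (\<lambda>_. 0)"
        then obtain i where vi: "v i \<noteq> 0" by auto
        then have iW: "i \<in> W" using vec unfolding vec_on_def by auto
        obtain js where js: "distinct js" "set js = W" "sorted_wrt (\<lambda>i j. \<bar>v i\<bar> \<ge> \<bar>v j\<bar>) js"
          "lovasz C W (\<lambda>i. \<bar>v i\<bar>) = lv C (\<lambda>i. \<bar>v i\<bar>) {} js" using lovasz_some[OF finW] by metis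
        obtain x xs where xs: "js = x # xs" using iW js(2) by (cases js) auto
        have ii: "i \<in> set (x#xs)" using iW js(2) xs by simp
        have ss: "sorted_wrt (\<lambda>i j. \<bar>v i\<bar> \<ge> \<bar>v j\<bar>) (x#xs)" using js(3) xs by simp
        have "\<bar>v x\<bar> \<ge> \<bar>v i\<bar>" using ii ss by (cases "i = x") auto
        then have vx: "\<bar>v x\<bar> > 0" using vi by simp
        have "x \<in> set js" using xs by simp
        then have xW: "x \<in> W" using js(2) by simp
        then have "J \<subset> insert x J" "insert x J \<subseteq> V" using W_def JV by auto
        then have "F (insert x J) > F J" using stable unfolding stable_set_def by simp
        then have "C {x} - C {} > 0" unfolding C_def contr_fun_def by simp
        then have t1: "\<bar>v x\<bar> * (C {x} - C {}) > 0" using vx by simp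
        have xsW: "{x} \<union> set xs \<subseteq> W" using js(2) xs by simp
        have "lv C (\<lambda>i. \<bar>v i\<bar>) {x} xs \<ge> 0" by (rule lv_nonneg[OF monoC xsW]) simp
        moreover have "N v = \<bar>v x\<bar> * (C {x} - C {}) + lv C (\<lambda>i. \<bar>v i\<bar>) {x} xs"
          using js(4) xs unfolding N_def by simp
        ultimately have "N v > 0" using t1 by linarith
        then show False using N0 by simp
      qed
    qed
    have hom: "N (\<lambda>i. a * v i) = \<bar>a\<bar> * N v" for v a
    proof -
      obtain js where js: "distinct js" "set js = W" "sorted_wrt (\<lambda>i j. \<bar>v i\<bar> \<ge> \<bar>v j\<bar>) js"
        using ex_sorted[OF finW] by metis
      have js2: "sorted_wrt (\<lambda>i j. \<bar>a * v i\<bar> \<ge> \<bar>a * v j\<bar>) js"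
        using js(3) by (rule sorted_wrt_mono_rel[rotated]) (simp add: abs_mult mult_left_mono)
      have "N (\<lambda>i. a * v i) = lv C (\<lambda>i. \<bar>a\<bar> * \<bar>v i\<bar>) {} js"
        using Nlv[OF js(1,2) js2] by (simp add: abs_mult)
      also have "\<dots> = \<bar>a\<bar> * N v" using Nlv[OF js] by (simp add: lv_scale)
      finally show ?thesis .
    qed
    have tri: "N (\<lambda>i. u i + v i) \<le> N u + N v" for u v
    proof -
      obtain js where js: "distinct js" "set js = W" "sorted_wrt (\<lambda>i j. \<bar>u i + v i\<bar> \<ge> \<bar>u j + v j\<bar>) js"
        using ex_sorted[OF finW] by metis
      obtain ju where ju: "distinct ju" "set ju = W" "sorted_wrt (\<lambda>i j. \<bar>u i\<bar> \<ge> \<bar>u j\<bar>) ju"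
        using ex_sorted[OF finW] by metis
      obtain jv where jv: "distinct jv" "set jv = W" "sorted_wrt (\<lambda>i j. \<bar>v i\<bar> \<ge> \<bar>v j\<bar>) jv"
        using ex_sorted[OF finW] by metis
      let ?s = "greedy C {} js"
      have sP: "\<forall>A \<subseteq> W. (\<Sum>i\<in>A. ?s i) \<le> C ({} \<union> A) - C {}"
        using PP[OF js(1)] js subC by simp
      have s0: "?s i \<ge> 0" for i using greedy_nonneg[OF monoC, of "{}" js] js by simp
      have "N (\<lambda>i. u i + v i) = (\<Sum>i\<in>W. \<bar>u i + v i\<bar> * ?s i)"
        using Nlv[OF js] lv_greedy[OF js(1)] js by simp
      also have "\<dots> \<le> (\<Sum>i\<in>W. \<bar>u i\<bar> * ?s i) + (\<Sum>i\<in>W. \<bar>v i\<bar> * ?s i)"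
        unfolding sum.distrib[symmetric]
      proof (intro sum_mono)
        fix i
        show "\<bar>u i + v i\<bar> * ?s i \<le> \<bar>u i\<bar> * ?s i + \<bar>v i\<bar> * ?s i"
          using mult_right_mono[OF abs_triangle_ineq s0] by (simp add: distrib_right)
      qed
      also have "(\<Sum>i\<in>W. \<bar>u i\<bar> * ?s i) \<le> N u"
        using lv_upper[OF ju(3) _ ju(1), of ?s C "{}"] sP ju Nlv[OF ju] by simp
      also have "(\<Sum>i\<in>W. \<bar>v i\<bar> * ?s i) \<le> N v"
        using lv_upper[OF jv(3) _ jv(1), of ?s C "{}"] sP jv Nlv[OF jv] by simp
      finally show ?thesis by simp
    qed
    show "is_norm_on W N" unfolding is_norm_on_def
      using nonneg zero hom tri by (intro conjI allI impI) simp_all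
  qed
  show ?thesis using P1 P2 P3 unfolding N_def C_def W_def by simp
qed

end
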